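(* Let $p,q$ be two distinct prime numbers and $l$ a positive integer. Then $\dfrac{1}{p}\in\mathbb{Q}\text{-}\mathcal{KS}(q^{l})$ if and only if $\dfrac{1}{q}\in\mathbb{Q}\text{-}\mathcal{KS}(p^{l})$.
   Context: Every nonzero rational $\alpha$ is written $\alpha=\alpha_1/\alpha_2$ with $\alpha_1\in\mathbb{Z}$, $\alpha_2$ a positive integer and $\gcd(\alpha_1,\alpha_2)=1$. For an integer $N\ge 2$ and a nonzero rational $\alpha=\alpha_1/\alpha_2$, $N$ is called an $\alpha$-Korselt number if $N\neq\alpha$ and $\alpha_2r-\alpha_1$ divides $\alpha_2N-\alpha_1$ (in $\mathbb{Z}$) for every prime divisor $r$ of $N$. $\mathbb{Q}\text{-}\mathcal{KS}(N)$ is the set of all $\beta\in\mathbb{Q}\setminus\{0,N\}$ such that $N$ is a $\beta$-Korselt number. *)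

theory Defs
  imports Complex_Main "HOL-Computational_Algebra.Primes"
begin

definition korselt :: "rat \<Rightarrow> nat \<Rightarrow> bool" where
  "korselt \<alpha> N \<longleftrightarrow> N \<ge> 2 \<and> \<alpha> \<noteq> 0 \<and> of_nat N \<noteq> \<alpha> \<and>
     (\<forall>r. prime r \<and> r dvd N \<longrightarrow>
        (snd (quotient_of \<alpha>) * int r - fst (quotient_of \<alpha>)) dvd
        (snd (quotient_of \<alpha>) * int N - fst (quotient_of \<alpha>)))"

definition QKS :: "nat \<Rightarrow> rat set" where
  "QKS N = {\<beta>. \<beta> \<noteq> 0 \<and> \<beta> \<noteq> of_nat N \<and> korselt \<beta> N}"

end

theory Submission imports Defs "HOL-Number_Theory.Cong" begin
lemma qo: "p > 0 \<Longrightarrow> quotient_of (1 / of_nat p :: rat) = (1, int p)"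
proof -
  assume "p > 0"
  have "(1 / of_nat p :: rat) = Fract 1 (int p)" by (simp add: Fract_of_int_quotient)
  then show ?thesis using \<open>p > 0\<close> by (simp add: quotient_of_Fract Rat.normalize_def)
qed

lemma key:
  fixes a b :: int and k :: nat
  assumes "(a*b-1) dvd (a*b^(Suc k) - 1)"
  shows "(a*b-1) dvd (b*a^(Suc k) - 1)"
proof -
  define m where "m = a*b-1"
  have ab: "[a*b = 1] (mod m)" unfolding m_def cong_iff_dvd_diff by simp
  have abk: "[a^k*b^k = 1] (mod m)" using cong_pow[OF ab, of k] by (simp add: power_mult_distrib)
  have "[a*b^(Suc k) = 1*b^k] (mod m)" using cong_mult[OF ab cong_refl[of "b^k"]] by (simp add: algebra_simps)
  moreover have "[a*b^(Suc k) = 1] (mod m)" using assms unfolding m_def cong_iff_dvd_diff by simp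
  ultimately have bk: "[b^k = 1] (mod m)" by (metis cong_sym cong_trans mult_1)
  have "[b*a^(Suc k) = 1*a^k] (mod m)" using cong_mult[OF ab cong_refl[of "a^k"]] by (simp add: algebra_simps)
  also have "[1*a^k = a^k*b^k] (mod m)" using cong_mult[OF cong_refl[of "a^k"] cong_sym[OF bk]] by simp
  also note abk
  finally show ?thesis unfolding m_def cong_iff_dvd_diff by simp
qed

lemma char:
  fixes p q l :: nat
  assumes "prime p" and "prime q" and "p \<noteq> q" and "l > 0"
  shows "(1 / of_nat p :: rat) \<in> QKS (q ^ l) \<longleftrightarrow> (int p * int q - 1) dvd (int p * int q ^ l - 1)"
proof -
  have p0: "p > 0" using assms(1) prime_gt_0_nat by blast
  have p2: "p \<ge> 2" using assms(1) prime_ge_2_nat by blast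
  have q2: "q \<ge> 2" using assms(2) prime_ge_2_nat by blast
  have N2: "q ^ l \<ge> 2"
    using q2 self_le_power[of q l] assms(4) by linarith
  have ne: "(of_nat (q ^ l) :: rat) \<noteq> 1 / of_nat p"
  proof
    assume h: "(of_nat (q ^ l) :: rat) = 1 / of_nat p"
    have "(of_nat (q ^ l) :: rat) \<ge> 2" using N2 by (metis of_nat_le_iff of_nat_numeral)
    moreover have "1 / (of_nat p :: rat) \<le> 1" using p0 by simp
    ultimately show False using h by simp
  qed
  have nz: "(1 / of_nat p :: rat) \<noteq> 0" using p0 by simp
  have rq: "prime r \<and> r dvd q ^ l \<longleftrightarrow> r = q" for r
    using assms(2,4) prime_dvd_power[of r q l] primes_dvd_imp_eq[of r q] dvd_power[of l q] by blast
  have f1: "fst (quotient_of (1 / of_nat p :: rat)) = 1" and f2: "snd (quotient_of (1 / of_nat p :: rat)) = int p"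
    using qo[OF p0] by auto
  have "korselt (1 / of_nat p) (q ^ l) \<longleftrightarrow>
      (\<forall>r. prime r \<and> r dvd q ^ l \<longrightarrow> (int p * int r - 1) dvd (int p * int (q ^ l) - 1))"
    unfolding korselt_def f1 f2 using N2 ne nz by blast
  also have "\<dots> \<longleftrightarrow> (int p * int q - 1) dvd (int p * int (q ^ l) - 1)"
  proof
    assume "\<forall>r. prime r \<and> r dvd q ^ l \<longrightarrow> (int p * int r - 1) dvd (int p * int (q ^ l) - 1)"
    then show "(int p * int q - 1) dvd (int p * int (q ^ l) - 1)" using rq[of q] by simp
  next
    assume h: "(int p * int q - 1) dvd (int p * int (q ^ l) - 1)"
    show "\<forall>r. prime r \<and> r dvd q ^ l \<longrightarrow> (int p * int r - 1) dvd (int p * int (q ^ l) - 1)"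
    proof (intro allI impI)
      fix r assume "prime r \<and> r dvd q ^ l"
      then have "r = q" using rq by simp
      then show "(int p * int r - 1) dvd (int p * int (q ^ l) - 1)" using h by simp
    qed
  qed
  finally have k: "korselt (1 / of_nat p) (q ^ l) \<longleftrightarrow>
      (int p * int q - 1) dvd (int p * int q ^ l - 1)" by simp
  have ne': "(1 / of_nat p :: rat) \<noteq> of_nat (q ^ l)" using ne by (rule not_sym)
  show ?thesis unfolding QKS_def mem_Collect_eq using k ne' nz by blast
qed

theorem proposition5p3:
  fixes p q l :: nat
  assumes "prime p" and "prime q" and "p \<noteq> q" and "l > 0"
  shows "(1 / of_nat p :: rat) \<in> QKS (q ^ l) \<longleftrightarrow> (1 / of_nat q :: rat) \<in> QKS (p ^ l)"
proof -
  obtain k where l: "l = Suc k" using assms(4) gr0_implies_Suc by blast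
  have "(1 / of_nat p :: rat) \<in> QKS (q ^ l) \<longleftrightarrow> (int p * int q - 1) dvd (int p * int q ^ l - 1)"
    using char assms by blast
  also have "\<dots> \<longleftrightarrow> (int q * int p - 1) dvd (int q * int p ^ l - 1)"
    using key[of "int p" "int q" k] key[of "int q" "int p" k] unfolding l
    by (auto simp: mult.commute)
  also have "\<dots> \<longleftrightarrow> (1 / of_nat q :: rat) \<in> QKS (p ^ l)"
    using char[of q p l] assms by auto
  finally show ?thesis .
qed
end
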